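(* For all finite sets of formulas $\Gamma,\Delta$: if $\Gamma\Vdash\Delta$, then the sequent $\Gamma\Rightarrow\Delta$ is provable in $\mathsf{CLp}$.
   Context: Fix a countably infinite set $\mathsf{At}$ of atoms. Formulas are built from atoms and the constant $\bot$ using the binary connectives $\land,\lor,\to$. All contexts are finite sets (not multisets) of formulas; a comma denotes union; a subscript $\mathsf{At}$ indicates a finite set of atoms. An atomic sequent has the form $\Gamma_{\mathsf{At}} \Rightarrow \Delta_{\mathsf{At}}$. An atomic rule has finitely many (possibly zero) atomic sequents as premises and one atomic sequent as conclusion; a rule with zero premises is an atomic axiom. A base is a (possibly empty) set of atomic rules; $\mathcal{C}\supseteq\mathcal{B}$ ($\mathcal{C}$ extends $\mathcal{B}$) if $\mathcal{C}$ contains every rule of $\mathcal{B}$. Derivability $\vdash_{\mathcal{B}}$ of atomic sequents is the least relation such that: (Axiom/Weakening) if an atomic axiom with conclusion $\Gamma_{\mathsf{At}}\Rightarrow\Delta_{\mathsf{At}}$ is in $\mathcal{B}$, then $\vdash_{\mathcal{B}} \Theta_{\mathsf{At}},\Gamma_{\mathsf{At}}\Rightarrow\Delta_{\mathsf{At}},\Sigma_{\mathsf{At}}$ for all sets of atoms $\Theta_{\mathsf{At}},\Sigma_{\mathsf{At}}$; (Mix) if a rule with premises $\Gamma^i_{\mathsf{At}}\Rightarrow\Delta^i_{\mathsf{At}}$ ($1\le i\le n$) and conclusion $\Gamma_{\mathsf{At}}\Rightarrow\Delta_{\mathsf{At}}$ is in $\mathcal{B}$ and $\vdash_{\mathcal{B}}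 \Theta^i_{\mathsf{At}},\Gamma^i_{\mathsf{At}}\Rightarrow\Delta^i_{\mathsf{At}},\Sigma^i_{\mathsf{At}}$ for each $i$, then $\vdash_{\mathcal{B}} \Theta^1_{\mathsf{At}},\dots,\Theta^n_{\mathsf{At}},\Gamma_{\mathsf{At}}\Rightarrow\Delta_{\mathsf{At}},\Sigma^1_{\mathsf{At}},\dots,\Sigma^n_{\mathsf{At}}$. Support $\Vdash_{\mathcal{B}}$: (At) $\Vdash_{\mathcal{B}}\Gamma_{\mathsf{At}}$ iff $\vdash_{\mathcal{B}}\ \Rightarrow\Gamma_{\mathsf{At}}$; ($\land$) $\Vdash_{\mathcal{B}} A\land B,\Gamma$ iff $\Vdash_{\mathcal{B}}A,\Gamma$ and $\Vdash_{\mathcal{B}}B,\Gamma$; ($\lor$) $\Vdash_{\mathcal{B}}A\lor B,\Gamma$ iff $\Vdash_{\mathcal{B}}A,B,\Gamma$; ($\to$) $\Vdash_{\mathcal{B}}A\to B,\Gamma$ iff $A\Vdash_{\mathcal{B}}B,\Gamma$; ($\bot$) $\Vdash_{\mathcal{B}}\bot,\Gamma$ iff $\Vdash_{\mathcal{B}}\Gamma$; (Inf) for $n\ge1$, $\{A^1,\dots,A^n\}\Vdash_{\mathcal{B}}\Delta$ iff for every $\mathcal{C}\supseteq\mathcal{B}$ and all sets of atoms $\Theta^1_{\mathsf{At}},\dots,\Theta^n_{\mathsf{At}}$, if $\Vdash_{\mathcal{C}}\Theta^i_{\mathsf{At}},A^i$ for all $i$ then $\Vdash_{\mathcal{C}}\Theta^1_{\mathsf{At}},\dots,\Theta^n_{\mathsf{At}},\Delta$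 (and $\varnothing\Vdash_{\mathcal{B}}\Delta$ means $\Vdash_{\mathcal{B}}\Delta$). The atomic identity rule $\mathsf{Ainit}$ is the atomic axiom $\Gamma_{\mathsf{At}},p\Rightarrow p,\Delta_{\mathsf{At}}$; the atomic cut rule $\mathsf{Acut}$ has premises $\Gamma^1_{\mathsf{At}}\Rightarrow\Delta^1_{\mathsf{At}},p$ and $p,\Gamma^2_{\mathsf{At}}\Rightarrow\Delta^2_{\mathsf{At}}$ and conclusion $\Gamma^1_{\mathsf{At}},\Gamma^2_{\mathsf{At}}\Rightarrow\Delta^1_{\mathsf{At}},\Delta^2_{\mathsf{At}}$. $\mathcal{ST}$ is the base consisting of all instances of $\mathsf{Ainit}$ and $\mathsf{Acut}$. Validity: $\Gamma\Vdash\Delta$ iff $\Gamma\Vdash_{\mathcal{B}}\Delta$ for every base $\mathcal{B}\supseteq\mathcal{ST}$. $\mathsf{CLp}$ is the sequent calculus on sequents $\Gamma\Rightarrow\Delta$ (finite sets of formulas) with rules: $\mathsf{init}$: $\Gamma,A\Rightarrow A,\Delta$; $L\bot$: $\Gamma,\bot\Rightarrow\Delta$; $R\bot$: from $\Gamma\Rightarrow\Delta$ infer $\Gamma\Rightarrow\bot,\Delta$; $L\land$: from $A,B,\Gamma\Rightarrow\Delta$ infer $A\land B,\Gamma\Rightarrow\Delta$; $R\land$: from $\Gamma\Rightarrow\Delta,A$ and $\Gamma'\Rightarrow\Delta',B$ infer $\Gamma,\Gamma'\Rightarrow\Delta,\Delta',A\land B$; $L\lor$: from $A,\Gamma\Rightarrow\Delta$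 and $B,\Gamma'\Rightarrow\Delta'$ infer $A\lor B,\Gamma,\Gamma'\Rightarrow\Delta,\Delta'$; $R\lor$: from $\Gamma\Rightarrow\Delta,A,B$ infer $\Gamma\Rightarrow\Delta,A\lor B$; $L\to$: from $\Gamma\Rightarrow\Delta,A$ and $B,\Gamma'\Rightarrow\Delta'$ infer $A\to B,\Gamma,\Gamma'\Rightarrow\Delta,\Delta'$; $R\to$: from $A,\Gamma\Rightarrow\Delta,B$ infer $\Gamma\Rightarrow\Delta,A\to B$. *)

theory Defs
  imports Main
begin

datatype form = Atom nat | Bot | And form form | Or form form | Imp form form

fun is_atom :: "form \<Rightarrow> bool" where
  "is_atom (Atom _) = True"
| "is_atom _ = False"

type_synonym aseq = "nat set \<times> nat set"
type_synonym arule = "aseq list \<times> aseq"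
type_synonym base = "arule set"

definition fin_aseq :: "aseq \<Rightarrow> bool" where
  "fin_aseq s \<longleftrightarrow> finite (fst s) \<and> finite (snd s)"

definition wf_base :: "base \<Rightarrow> bool" where
  "wf_base B \<longleftrightarrow> (\<forall>r\<in>B. fin_aseq (snd r) \<and> (\<forall>s\<in>set (fst r). fin_aseq s))"

inductive derivable :: "base \<Rightarrow> nat set \<Rightarrow> nat set \<Rightarrow> bool" for B where
  axiom: "([], (G, D)) \<in> B \<Longrightarrow> finite Th \<Longrightarrow> finite Si \<Longrightarrow> derivable B (Th \<union> G) (D \<union> Si)"
| mix: "(ps, (G, D)) \<in> B \<Longrightarrow>
        (\<forall>i<length ps. finite (Th i) \<and> finite (Si i) \<and>
             derivable B (Th i \<union> fst (ps ! i)) (snd (ps ! i) \<union> Si i)) \<Longrightarrow>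
        derivable B ((\<Union>i<length ps. Th i) \<union> G) (D \<union> (\<Union>i<length ps. Si i))"

fun wt :: "form \<Rightarrow> nat" where
  "wt (Atom _) = 0"
| "wt Bot = 1"
| "wt (And a b) = wt a + wt b + 1"
| "wt (Or a b) = wt a + wt b + 1"
| "wt (Imp a b) = wt a + wt b + 1"

definition msize :: "form set \<Rightarrow> nat" where
  "msize S = sum wt S"

definition pick :: "form set \<Rightarrow> form" where
  "pick S = (SOME F. F \<in> S \<and> \<not> is_atom F)"

definition atoms_of :: "form set \<Rightarrow> nat set" where
  "atoms_of S = {p. Atom p \<in> S}"

lemma wt_pos: "\<not> is_atom F \<Longrightarrow> wt F > 0"
  by (cases F) auto

lemma pick_in:
  assumes "\<not> (\<forall>F\<in>S. is_atom F)" shows "pick S \<in> S" "\<not> is_atom (pick S)"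
proof -
  have "\<exists>F. F \<in> S \<and> \<not> is_atom F" using assms by blast
  then have "pick S \<in> S \<and> \<not> is_atom (pick S)" unfolding pick_def by (rule someI_ex)
  then show "pick S \<in> S" "\<not> is_atom (pick S)" by auto
qed

lemma msize_split:
  assumes "finite S" "F \<in> S" shows "msize S = wt F + msize (S - {F})"
  using assms unfolding msize_def by (simp add: sum.remove)

lemma msize_insert_le: "finite R \<Longrightarrow> msize (insert A R) \<le> wt A + msize R"
  unfolding msize_def by (cases "A \<in> R") (auto simp: insert_absorb)

lemma msize_union_le: "finite R \<Longrightarrow> finite T \<Longrightarrow> msize (T \<union> R) \<le> msize T + msize R"
  unfolding msize_def by (simp add: sum_Un_nat)

lemma msize_atoms: "msize (Atom ` Th) = 0"
proof (cases "finite (Atom ` Th)")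
  case True then show ?thesis unfolding msize_def by (auto simp: sum.reindex inj_on_def)
next
  case False then show ?thesis unfolding msize_def by simp
qed

lemma pick_split:
  assumes "finite S" "pick S = F" "x \<in> S" "\<not> is_atom x"
  shows "msize S = wt F + msize (S - {F})" "\<not> is_atom F" "finite (S - {F})"
proof -
  have "\<not> (\<forall>F\<in>S. is_atom F)" using assms by blast
  then have "F \<in> S" "\<not> is_atom F" using pick_in assms(2) by auto
  then show "msize S = wt F + msize (S - {F})" "\<not> is_atom F" "finite (S - {F})"
    using msize_split assms(1) by auto
qed

function support :: "base \<Rightarrow> form set \<Rightarrow> bool" where
  "support B S =
    (if \<not> finite S then False
     else if (\<forall>F\<in>S. is_atom F) then derivable B {} (atoms_of S)
     else (case pick S of
             And A C \<Rightarrow> support B (insert A (S - {pick S})) \<and> support B (insert C (S - {pick S}))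
           | Or A C \<Rightarrow> support B (insert A (insert C (S - {pick S})))
           | Bot \<Rightarrow> support B (S - {pick S})
           | Imp A C \<Rightarrow>
               (\<forall>B'. B \<subseteq> B' \<and> wf_base B' \<longrightarrow>
                  (\<forall>Th. finite Th \<longrightarrow> support B' (insert A (Atom ` Th)) \<longrightarrow>
                        support B' (insert C (Atom ` Th \<union> (S - {pick S})))))
           | Atom _ \<Rightarrow> False))"
  by pat_completeness auto
termination
  apply (relation "measure (\<lambda>(B, S). msize S)")
  apply simp
  apply auto
  subgoal for S x using pick_split[of S Bot x] by simp
  subgoal for S a b x using pick_split[of S "And a b" x] msize_insert_le[of "S - {And a b}" a] by simp
  subgoal for S a b x using pick_split[of S "And a b" x] msize_insert_le[of "S - {And a b}" b] by simp
  subgoal for S a b x using pick_split[of S "Or a b" x] msize_insert_le[of "S - {Or a b}" b]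
      msize_insert_le[of "insert b (S - {Or a b})" a] by simp
  subgoal for B S a b C Th x using pick_split[of S "Imp a b" x]
      msize_insert_le[of "Atom ` Th" a] msize_atoms[of Th] by simp
  subgoal for B S a b C Th x using pick_split[of S "Imp a b" x]
      msize_insert_le[of "Atom ` Th \<union> (S - {Imp a b})" b] msize_atoms[of Th]
      msize_union_le[of "S - {Imp a b}" "Atom ` Th"] by simp
  done

definition infer :: "base \<Rightarrow> form set \<Rightarrow> form set \<Rightarrow> bool" where
  "infer B G D =
    (if G = {} then support B D
     else (\<forall>C. B \<subseteq> C \<and> wf_base C \<longrightarrow>
             (\<forall>Th :: form \<Rightarrow> nat set.
                (\<forall>A\<in>G. finite (Th A) \<and> support C (insert A (Atom ` Th A))) \<longrightarrow>
                support C ((\<Union>A\<in>G. Atom ` Th A) \<union> D))))"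

definition Ainit :: base where
  "Ainit = {([], (G \<union> {p}, {p} \<union> D)) | G D p. finite G \<and> finite D}"

definition Acut :: base where
  "Acut = {([(G1, D1 \<union> {p}), ({p} \<union> G2, D2)], (G1 \<union> G2, D1 \<union> D2)) | G1 D1 G2 D2 p.
             finite G1 \<and> finite D1 \<and> finite G2 \<and> finite D2}"

definition ST :: base where
  "ST = Ainit \<union> Acut"

definition valid :: "form set \<Rightarrow> form set \<Rightarrow> bool" where
  "valid G D \<longleftrightarrow> (\<forall>B. wf_base B \<and> ST \<subseteq> B \<longrightarrow> infer B G D)"

inductive CLp :: "form set \<Rightarrow> form set \<Rightarrow> bool" where
  init: "finite G \<Longrightarrow> finite D \<Longrightarrow> CLp (G \<union> {A}) ({A} \<union> D)"
| LBot: "finite G \<Longrightarrow> finite D \<Longrightarrow> CLp (G \<union> {Bot}) D"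
| RBot: "CLp G D \<Longrightarrow> CLp G ({Bot} \<union> D)"
| LAnd: "CLp ({A, B} \<union> G) D \<Longrightarrow> CLp ({And A B} \<union> G) D"
| RAnd: "CLp G (D \<union> {A}) \<Longrightarrow> CLp G' (D' \<union> {B}) \<Longrightarrow> CLp (G \<union> G') (D \<union> D' \<union> {And A B})"
| LOr: "CLp ({A} \<union> G) D \<Longrightarrow> CLp ({B} \<union> G') D' \<Longrightarrow> CLp ({Or A B} \<union> G \<union> G') (D \<union> D')"
| ROr: "CLp G (D \<union> {A, B}) \<Longrightarrow> CLp G (D \<union> {Or A B})"
| LImp: "CLp G (D \<union> {A}) \<Longrightarrow> CLp ({B} \<union> G') D' \<Longrightarrow> CLp ({Imp A B} \<union> G \<union> G') (D \<union> D')"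
| RImp: "CLp ({A} \<union> G) (D \<union> {B}) \<Longrightarrow> CLp G (D \<union> {Imp A B})"

end

theory Submission
  imports Defs
begin

declare support.simps[simp del]

lemma d_mono: "derivable B G D \<Longrightarrow> B \<subseteq> B' \<Longrightarrow> derivable B' G D"
proof (induction rule: derivable.induct)
  case (axiom G D Th Si) then show ?case by (auto intro: derivable.axiom)
next
  case (mix ps G D Th Si) then show ?case by (intro derivable.mix) auto
qed

lemma d_weakR: "derivable B G D \<Longrightarrow> finite X \<Longrightarrow> derivable B G (D \<union> X)"
proof (induction rule: derivable.induct)
  case (axiom G D Th Si)
  then have "derivable B (Th \<union> G) (D \<union> (Si \<union> X))" by (intro derivable.axiom) auto
  then show ?case by (simp add: Un_assoc)
next
  case (mix ps G D Th Si)
  show ?case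
  proof (cases "ps = []")
    case True
    then have "derivable B ({} \<union> G) (D \<union> X)" using mix by (intro derivable.axiom) auto
    then show ?thesis using True by simp
  next
    case False
    define Si' where "Si' = Si(0 := Si 0 \<union> X)"
    have "derivable B ((\<Union>i<length ps. Th i) \<union> G) (D \<union> (\<Union>i<length ps. Si' i))"
      apply (rule derivable.mix[OF mix(1)])
      using mix(2,3) unfolding Si'_def by (auto simp: Un_assoc)
    moreover have "(\<Union>i<length ps. Si' i) = (\<Union>i<length ps. Si i) \<union> X"
      using False unfolding Si'_def
      apply (auto split: if_splits)
      by (metis IntI lessThan_iff mem_Collect_eq neq0_conv)
    ultimately show ?thesis by (simp add: Un_assoc)
  qed
qed

lemma d_weak_sub: "derivable B G D \<Longrightarrow> D \<subseteq> D' \<Longrightarrow> finite D' \<Longrightarrow> derivable B G D'"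
  using d_weakR[of B G D D'] by (simp add: Un_absorb1)

lemma d_cut:
  assumes "ST \<subseteq> C" "derivable C {} (D1 \<union> {p})" "derivable C {p} {}" "finite D1"
  shows "derivable C {} D1"
proof -
  let ?r = "([({}, D1 \<union> {p}), ({p} \<union> {}, {})], ({} \<union> {}, D1 \<union> {})) :: arule"
  have r: "?r \<in> C" using assms(1,4) unfolding ST_def Acut_def by blast
  have "derivable C ((\<Union>i<length (fst ?r). (\<lambda>_. {}) i) \<union> ({} \<union> {})) ((D1 \<union> {}) \<union> (\<Union>i<length (fst ?r). (\<lambda>_. {}) i))"
    apply (rule derivable.mix)
    using r apply simp
    using assms(2,3) by (auto simp: less_Suc_eq nth_Cons')
  then show ?thesis by simp
qed

fun tv :: "nat set \<Rightarrow> form \<Rightarrow> bool" where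
  "tv V (Atom p) = (p \<in> V)"
| "tv V Bot = False"
| "tv V (And a b) = (tv V a \<and> tv V b)"
| "tv V (Or a b) = (tv V a \<or> tv V b)"
| "tv V (Imp a b) = (tv V a \<longrightarrow> tv V b)"

definition Bv :: "nat set \<Rightarrow> base" where
  "Bv V = ST \<union> {([], ({}, {p})) | p. p \<in> V} \<union> {([], ({p}, {})) | p. p \<notin> V}"

lemma wf_Bv: "wf_base (Bv V)"
  unfolding wf_base_def Bv_def ST_def Ainit_def Acut_def fin_aseq_def by auto

lemma ST_Bv: "ST \<subseteq> Bv V" unfolding Bv_def by auto

lemma sound_Bv: "derivable (Bv V) G D \<Longrightarrow> G \<subseteq> V \<Longrightarrow> D \<inter> V \<noteq> {}"
proof (induction rule: derivable.induct)
  case (axiom G D Th Si)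
  then show ?case unfolding Bv_def ST_def Ainit_def Acut_def by auto
next
  case (mix ps G D Th Si)
  show ?case
  proof (cases "ps = []")
    case True
    then show ?thesis using mix unfolding Bv_def ST_def Ainit_def Acut_def by auto
  next
    case False
    then obtain G1 D1 G2 D2 p where ps: "ps = [(G1, D1 \<union> {p}), ({p} \<union> G2, D2)]"
      and GD: "G = G1 \<union> G2" "D = D1 \<union> D2"
      using mix(1) unfolding Bv_def ST_def Ainit_def Acut_def by auto
    have "0 < length ps" "1 < length ps" using ps by auto
    then have "Th 0 \<union> fst (ps!0) \<subseteq> V \<longrightarrow> (snd (ps!0) \<union> Si 0) \<inter> V \<noteq> {}"
       "Th 1 \<union> fst (ps!1) \<subseteq> V \<longrightarrow> (snd (ps!1) \<union> Si 1) \<inter> V \<noteq> {}"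
      using mix(2) by blast+
    then have i0: "Th 0 \<union> G1 \<subseteq> V \<longrightarrow> (D1 \<union> {p} \<union> Si 0) \<inter> V \<noteq> {}"
      and i1: "Th 1 \<union> ({p} \<union> G2) \<subseteq> V \<longrightarrow> (D2 \<union> Si 1) \<inter> V \<noteq> {}"
      using ps by auto
    have "Th 0 \<subseteq> V" "Th 1 \<subseteq> V" "G1 \<subseteq> V" "G2 \<subseteq> V" using mix(3) ps GD by auto
    then show ?thesis using i0 i1 ps GD by auto
  qed
qed

lemma support_unfold:
  assumes "finite S" "\<not> (\<forall>F\<in>S. is_atom F)"
  shows "support C S = (case pick S of
             And A B \<Rightarrow> support C (insert A (S - {pick S})) \<and> support C (insert B (S - {pick S}))
           | Or A B \<Rightarrow> support C (insert A (insert B (S - {pick S})))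
           | Bot \<Rightarrow> support C (S - {pick S})
           | Imp A B \<Rightarrow>
               (\<forall>B'. C \<subseteq> B' \<and> wf_base B' \<longrightarrow>
                  (\<forall>Th. finite Th \<longrightarrow> support B' (insert A (Atom ` Th)) \<longrightarrow>
                        support B' (insert B (Atom ` Th \<union> (S - {pick S})))))
           | Atom _ \<Rightarrow> False)"
  using assms by (subst support.simps) (simp; blast)

lemma support_atoms:
  assumes "finite S" "\<forall>F\<in>S. is_atom F"
  shows "support C S = derivable C {} (atoms_of S)"
  using assms by (subst support.simps) simp

lemma finite_atoms_of: "finite S \<Longrightarrow> finite (atoms_of S)"
proof -
  assume "finite S"
  have "atoms_of S \<subseteq> (\<lambda>F. case F of Atom p \<Rightarrow> p) ` S"
    unfolding atoms_of_def by (force)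
  then show ?thesis using \<open>finite S\<close> finite_subset by blast
qed

lemma atoms_of_insert_nonatom: "\<not> is_atom F \<Longrightarrow> atoms_of (insert F S) = atoms_of S"
  unfolding atoms_of_def by (cases F) auto

lemma atoms_of_mono: "S \<subseteq> T \<Longrightarrow> atoms_of S \<subseteq> atoms_of T"
  unfolding atoms_of_def by auto

lemma atoms_of_image: "atoms_of (Atom ` Th) = Th"
  unfolding atoms_of_def by auto

lemma W_aux: "\<forall>S C. msize S = n \<longrightarrow> finite S \<longrightarrow> derivable C {} (atoms_of S) \<longrightarrow> support C S"
proof (induction n rule: less_induct)
  case (less n)
  show ?case
  proof (intro allI impI)
    fix S C assume ms: "msize S = n" and fS: "finite S" and d: "derivable C {} (atoms_of S)"
    show "support C S"
    proof (cases "\<forall>F\<in>S. is_atom F")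
      case True then show ?thesis using support_atoms[OF fS True] d by simp
    next
      case False
      then obtain x where x: "x \<in> S" "\<not> is_atom x" by blast
      define F where "F = pick S"
      define S' where "S' = S - {F}"
      have sp: "msize S = wt F + msize S'" "\<not> is_atom F" "finite S'" "F \<in> S"
        using pick_split[OF fS F_def[symmetric] x] pick_in[OF False] F_def S'_def by auto
      have aS: "atoms_of S = atoms_of S'"
        using sp atoms_of_insert_nonatom[of F S'] S'_def by (simp add: insert_absorb)
      have IH: "\<And>T C. msize T < n \<Longrightarrow> finite T \<Longrightarrow> derivable C {} (atoms_of T) \<Longrightarrow> support C T"
        using less by blast
      have IHS: "\<And>T C. msize T < n \<Longrightarrow> finite T \<Longrightarrow> S' \<subseteq> T \<Longrightarrow> derivable C {} (atoms_of S) \<Longrightarrow> support C T"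
        using IH d_weak_sub atoms_of_mono finite_atoms_of aS by metis
      note U = support_unfold[OF fS False, of C, folded F_def, folded S'_def]
      show ?thesis
      proof (cases F)
        case (Atom p) then show ?thesis using sp by simp
      next
        case Bot
        then show ?thesis using U IHS[of S' C] sp ms d by simp
      next
        case (And A B)
        have "msize (insert A S') < n" "msize (insert B S') < n"
          using msize_insert_le[OF sp(3), of A] msize_insert_le[OF sp(3), of B] sp ms And by auto
        then show ?thesis using U IHS[of "insert A S'" C] IHS[of "insert B S'" C] sp d And by auto
      next
        case (Or A B)
        have "msize (insert A (insert B S')) < n"
          using msize_insert_le[OF sp(3), of B] msize_insert_le[of "insert B S'" A] sp ms Or by auto
        then show ?thesis using U IHS[of "insert A (insert B S')" C] sp d Or by auto
      next
        case (Imp A B)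
        have "support C' (insert B (Atom ` Th \<union> S'))" if "C \<subseteq> C'" "finite Th" for C' Th
        proof -
          have "msize (insert B (Atom ` Th \<union> S')) < n"
            using msize_insert_le[of "Atom ` Th \<union> S'" B] msize_union_le[of S' "Atom ` Th"]
              msize_atoms[of Th] sp ms Imp that by auto
          moreover have "derivable C' {} (atoms_of S)" using d d_mono that by blast
          ultimately show ?thesis using IHS[of "insert B (Atom ` Th \<union> S')" C'] sp that by auto
        qed
        then show ?thesis using U Imp by auto
      qed
    qed
  qed
qed

lemma W: "finite S \<Longrightarrow> derivable C {} (atoms_of S) \<Longrightarrow> support C S"
  using W_aux by blast

lemma cut_false:
  assumes "Bv V \<subseteq> C" "\<not> tv V A" "finite S" "derivable C {} (atoms_of (insert A S))"
  shows "derivable C {} (atoms_of S)"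
proof (cases A)
  case (Atom p)
  have "atoms_of (insert A S) = atoms_of S \<union> {p}" using Atom unfolding atoms_of_def by auto
  moreover have "derivable C {p} {}"
  proof -
    have "([], ({p}, {})) \<in> C" using assms(1,2) Atom unfolding Bv_def by auto
    from derivable.axiom[OF this, of "{}" "{}"] show ?thesis by simp
  qed
  ultimately show ?thesis using d_cut[of C "atoms_of S" p] assms ST_Bv finite_atoms_of by auto
qed (use assms atoms_of_insert_nonatom in auto)

lemma true_atom:
  assumes "Bv V \<subseteq> C" "p \<in> V" "finite X" "p \<in> X"
  shows "derivable C {} X"
proof -
  have "([], ({}, {p})) \<in> C" using assms unfolding Bv_def by auto
  from derivable.axiom[OF this, of "{}" X] show ?thesis using assms by (simp add: insert_absorb)
qed

lemma M_aux: "\<forall>S C. msize S = n \<longrightarrow> finite S \<longrightarrow> Bv V \<subseteq> C \<longrightarrow> wf_base C \<longrightarrow>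
   ((\<exists>F\<in>S. tv V F) \<longrightarrow> support C S) \<and>
   (support C S \<longrightarrow> (\<forall>F\<in>S. \<not> is_atom F \<longrightarrow> \<not> tv V F) \<longrightarrow> derivable C {} (atoms_of S))"
proof (induction n rule: less_induct)
  case (less n)
  have IH1: "\<And>T C. msize T < n \<Longrightarrow> finite T \<Longrightarrow> Bv V \<subseteq> C \<Longrightarrow> wf_base C \<Longrightarrow> \<exists>F\<in>T. tv V F \<Longrightarrow> support C T"
    using less by blast
  have IH2: "\<And>T C. msize T < n \<Longrightarrow> finite T \<Longrightarrow> Bv V \<subseteq> C \<Longrightarrow> wf_base C \<Longrightarrow> support C T \<Longrightarrow>
     (\<forall>F\<in>T. \<not> is_atom F \<longrightarrow> \<not> tv V F) \<Longrightarrow> derivable C {} (atoms_of T)"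
    using less by blast
  show ?case
  proof (intro allI impI)
    fix S C assume ms: "msize S = n" and fS: "finite S" and BC: "Bv V \<subseteq> C" and wfC: "wf_base C"
    show "((\<exists>F\<in>S. tv V F) \<longrightarrow> support C S) \<and>
      (support C S \<longrightarrow> (\<forall>F\<in>S. \<not> is_atom F \<longrightarrow> \<not> tv V F) \<longrightarrow> derivable C {} (atoms_of S))"
    proof (cases "\<forall>F\<in>S. is_atom F")
      case True
      have "support C S" if GG: "G \<in> S" "tv V G" for G
      proof -
        have "is_atom G" using True GG(1) by blast
        then obtain p where p: "G = Atom p" by (cases G) auto
        have "p \<in> atoms_of S" using p GG unfolding atoms_of_def by auto
        then show ?thesis using true_atom[OF BC _ finite_atoms_of[OF fS]] p GG
            support_atoms[OF fS True] by auto
      qed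
      then show ?thesis using support_atoms[OF fS True] by blast
    next
      case False
      then obtain x where x: "x \<in> S" "\<not> is_atom x" by blast
      define F where "F = pick S"
      define S' where "S' = S - {F}"
      have sp: "msize S = wt F + msize S'" "\<not> is_atom F" "finite S'" "F \<in> S"
        using pick_split[OF fS F_def[symmetric] x] pick_in[OF False] F_def S'_def by auto
      have SS: "S = insert F S'" using sp S'_def by auto
      have aS: "atoms_of S = atoms_of S'"
        using sp atoms_of_insert_nonatom[of F S'] SS by simp
      note U = support_unfold[OF fS False, of C, folded F_def, folded S'_def]
      show ?thesis
      proof (cases F)
        case (Atom p) then show ?thesis using sp by simp
      next
        case Bot
        have m: "msize S' < n" using sp ms Bot by simp
        show ?thesis using U Bot IH1[OF m sp(3) BC wfC] IH2[OF m sp(3) BC wfC] SS aS by auto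
      next
        case (And A B)
        have mA: "msize (insert A S') < n" and mB: "msize (insert B S') < n"
          using msize_insert_le[OF sp(3), of A] msize_insert_le[OF sp(3), of B] sp ms And by auto
        note IA1 = IH1[OF mA _ BC wfC] and IB1 = IH1[OF mB _ BC wfC]
        note IA2 = IH2[OF mA _ BC wfC] and IB2 = IH2[OF mB _ BC wfC]
        have P1: "support C S" if "G \<in> S" "tv V G" for G
        proof (cases "G = F")
          case True
          then show ?thesis using U And IA1 IB1 sp that by auto
        next
          case False
          then have "G \<in> S'" using that SS by auto
          then show ?thesis using U And IA1 IB1 sp that by auto
        qed
        have P2: "derivable C {} (atoms_of S)" if "support C S" "\<forall>F\<in>S. \<not> is_atom F \<longrightarrow> \<not> tv V F"
        proof -
          have nF: "\<not> tv V A \<or> \<not> tv V B" using that(2) sp And by auto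
          then show ?thesis
          proof
            assume a: "\<not> tv V A"
            have "derivable C {} (atoms_of (insert A S'))"
              using IA2 that U And sp a SS by auto
            then show ?thesis using cut_false[OF BC a sp(3)] aS by simp
          next
            assume a: "\<not> tv V B"
            have "derivable C {} (atoms_of (insert B S'))"
              using IB2 that U And sp a SS by auto
            then show ?thesis using cut_false[OF BC a sp(3)] aS by simp
          qed
        qed
        show ?thesis using P1 P2 by blast
      next
        case (Or A B)
        have m: "msize (insert A (insert B S')) < n"
          using msize_insert_le[OF sp(3), of B] msize_insert_le[of "insert B S'" A] sp ms Or by auto
        note I1 = IH1[OF m _ BC wfC] and I2 = IH2[OF m _ BC wfC]
        have P1: "support C S" if "G \<in> S" "tv V G" for G
        proof (cases "G = F")
          case True
          then show ?thesis using U Or I1 sp that by auto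
        next
          case False
          then have "G \<in> S'" using that SS by auto
          then show ?thesis using U Or I1 sp that by auto
        qed
        have P2: "derivable C {} (atoms_of S)" if "support C S" "\<forall>F\<in>S. \<not> is_atom F \<longrightarrow> \<not> tv V F"
        proof -
          have a: "\<not> tv V A" and b: "\<not> tv V B" using that(2) sp Or by auto
          have "derivable C {} (atoms_of (insert A (insert B S')))"
            using I2 that U Or sp a b SS by auto
          then have "derivable C {} (atoms_of (insert B S'))" using cut_false[OF BC a] sp by simp
          then show ?thesis using cut_false[OF BC b sp(3)] aS by simp
        qed
        show ?thesis using P1 P2 by blast
      next
        case (Imp A B)
        have mA: "msize (insert A (Atom ` Th)) < n" if "finite Th" for Th
          using msize_insert_le[of "Atom ` Th" A] msize_atoms[of Th] sp ms Imp that by auto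
        have mB: "msize (insert B (Atom ` Th \<union> S')) < n" if "finite Th" for Th
          using msize_insert_le[of "Atom ` Th \<union> S'" B] msize_union_le[of S' "Atom ` Th"]
              msize_atoms[of Th] sp ms Imp that by auto
        have P1: "support C S" if GG: "G \<in> S" "tv V G" for G
        proof -
          have "support C' (insert B (Atom ` Th \<union> S'))"
            if C': "C \<subseteq> C'" "wf_base C'" and Th: "finite Th" and sA: "support C' (insert A (Atom ` Th))"
            for C' Th
          proof -
            have BC': "Bv V \<subseteq> C'" using BC C' by auto
            show ?thesis
            proof (cases "(G \<in> S' \<or> tv V B)")
              case True
              then show ?thesis using IH1[OF mB[OF Th] _ BC' C'(2)] sp Th GG by auto
            next
              case False
              then have a: "\<not> tv V A" using GG SS Imp by auto
              have "derivable C' {} (atoms_of (insert A (Atom ` Th)))"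
                using IH2[OF mA[OF Th] _ BC' C'(2) sA] Th a by auto
              then have "derivable C' {} Th" using cut_false[OF BC' a, of "Atom ` Th"] Th atoms_of_image[of Th] by simp
              then have "derivable C' {} (atoms_of (insert B (Atom ` Th \<union> S')))"
                using d_weak_sub finite_atoms_of sp Th atoms_of_mono atoms_of_image
                by (metis finite.insertI finite_UnI finite_imageI sup.cobounded1 subset_insertI2)
              then show ?thesis using W sp Th by auto
            qed
          qed
          then show ?thesis using U Imp by auto
        qed
        have P2: "derivable C {} (atoms_of S)" if "support C S" "\<forall>F\<in>S. \<not> is_atom F \<longrightarrow> \<not> tv V F"
        proof -
          have a: "tv V A" and b: "\<not> tv V B" using that(2) sp Imp by auto
          have "support C (insert A (Atom ` {}))" using IH1[OF mA[OF finite.emptyI] _ BC wfC] a by auto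
          moreover have "\<forall>Th. finite Th \<longrightarrow> support C (insert A (Atom ` Th)) \<longrightarrow> support C (insert B (Atom ` Th \<union> S'))"
            using that(1) U Imp wfC by auto
          ultimately have "support C (insert B (Atom ` {} \<union> S'))" by blast
          then have "derivable C {} (atoms_of (insert B S'))"
            using IH2[OF mB[of "{}"] _ BC wfC] that(2) sp b SS by auto
          then show ?thesis using cut_false[OF BC b sp(3)] aS by simp
        qed
        show ?thesis using P1 P2 by blast
      qed
    qed
  qed
qed

lemma M1: "finite S \<Longrightarrow> Bv V \<subseteq> C \<Longrightarrow> wf_base C \<Longrightarrow> \<exists>F\<in>S. tv V F \<Longrightarrow> support C S"
  using M_aux by blast

lemma M2: "finite S \<Longrightarrow> Bv V \<subseteq> C \<Longrightarrow> wf_base C \<Longrightarrow> support C S \<Longrightarrow>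
   \<forall>F\<in>S. \<not> is_atom F \<longrightarrow> \<not> tv V F \<Longrightarrow> derivable C {} (atoms_of S)"
  using M_aux by blast

definition cvalid :: "form set \<Rightarrow> form set \<Rightarrow> bool" where
  "cvalid G D \<longleftrightarrow> (\<forall>V. (\<forall>A\<in>G. tv V A) \<longrightarrow> (\<exists>B\<in>D. tv V B))"

lemma msize_ins2: "finite R \<Longrightarrow> msize (insert A (insert B R)) \<le> wt A + wt B + msize R"
  using msize_insert_le[of "insert B R" A] msize_insert_le[of R B] by simp

lemma CLp_aux: "\<forall>G D. msize G + msize D = n \<longrightarrow> finite G \<longrightarrow> finite D \<longrightarrow> cvalid G D \<longrightarrow> CLp G D"
proof (induction n rule: less_induct)
  case (less n)
  have IH: "\<And>G D. msize G + msize D < n \<Longrightarrow> finite G \<Longrightarrow> finite D \<Longrightarrow> cvalid G D \<Longrightarrow> CLp G D"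
    using less by blast
  show ?case
  proof (intro allI impI)
    fix G D assume ms: "msize G + msize D = n" and fG: "finite G" and fD: "finite D" and cv: "cvalid G D"
    show "CLp G D"
    proof (cases "\<exists>x\<in>G. \<not> is_atom x")
      case True
      then obtain F where F: "F \<in> G" "\<not> is_atom F" by blast
      define G' where "G' = G - {F}"
      have fG': "finite G'" using fG G'_def by auto
      have mG: "msize G = wt F + msize G'" using msize_split[OF fG F(1)] G'_def by simp
      have GG: "G = insert F G'" using F G'_def by auto
      show ?thesis
      proof (cases F)
        case (Atom x1)
        then show ?thesis using F by simp
      next
        case Bot
        then show ?thesis using CLp.LBot[OF fG' fD] GG by simp
      next
        case (And A B)
        have "CLp ({A, B} \<union> G') D"
          apply (rule IH)
          using msize_ins2[OF fG', of A B] mG ms And fG' fD cv GG by (auto simp: cvalid_def)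
        then show ?thesis using CLp.LAnd GG And by fastforce
      next
        case (Or A B)
        have "CLp ({A} \<union> G') D" "CLp ({B} \<union> G') D"
          using msize_insert_le[OF fG', of A] msize_insert_le[OF fG', of B] mG ms Or fG' fD cv GG
          by (auto intro!: IH simp: cvalid_def)
        from CLp.LOr[OF this] show ?thesis using GG Or by simp
      next
        case (Imp A B)
        have "CLp G' (D \<union> {A})" "CLp ({B} \<union> G') D"
          using msize_insert_le[OF fD, of A] msize_insert_le[OF fG', of B] mG ms Imp fG' fD cv GG
          by (auto intro!: IH simp: cvalid_def)
        from CLp.LImp[OF this] show ?thesis using GG Imp by simp
      qed
    next
      case nG: False
      show ?thesis
      proof (cases "\<exists>x\<in>D. \<not> is_atom x")
        case True
        then obtain F where F: "F \<in> D" "\<not> is_atom F" by blast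
        define D' where "D' = D - {F}"
        have fD': "finite D'" using fD D'_def by auto
        have mD: "msize D = wt F + msize D'" using msize_split[OF fD F(1)] D'_def by simp
        have DD: "D = insert F D'" using F D'_def by auto
        show ?thesis
        proof (cases F)
          case (Atom x1)
          then show ?thesis using F by simp
        next
          case Bot
          have "CLp G D'" using mD ms Bot fG fD' cv DD by (auto intro!: IH simp: cvalid_def)
          from CLp.RBot[OF this] show ?thesis using DD Bot by simp
        next
          case (And A B)
          have "cvalid G (D' \<union> {A})" "cvalid G (D' \<union> {B})"
            using cv DD And unfolding cvalid_def by (simp; blast)+
          then have "CLp G (D' \<union> {A})" "CLp G (D' \<union> {B})"
            using msize_insert_le[OF fD', of A] msize_insert_le[OF fD', of B] mD ms And fG fD'
            by (auto intro!: IH)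
          from CLp.RAnd[OF this] show ?thesis using DD And by (simp add: insert_commute)
        next
          case (Or A B)
          have "CLp G (D' \<union> {A, B})"
            apply (rule IH)
            using msize_ins2[OF fD', of A B] mD ms Or fG fD' cv DD by (auto simp: cvalid_def)
          from CLp.ROr[OF this] show ?thesis using DD Or by (simp add: insert_commute)
        next
          case (Imp A B)
          have "CLp ({A} \<union> G) (D' \<union> {B})"
            using msize_insert_le[OF fD', of B] msize_insert_le[OF fG, of A] mD ms Imp fG fD' cv DD
            by (auto intro!: IH simp: cvalid_def)
          from CLp.RImp[OF this] show ?thesis using DD Imp by (simp add: insert_commute)
        qed
      next
        case False
        have "\<forall>A\<in>G. tv (atoms_of G) A"
        proof
          fix A assume "A \<in> G"
          moreover then have "is_atom A" using nG by blast
          ultimately show "tv (atoms_of G) A" by (cases A) (auto simp: atoms_of_def)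
        qed
        then obtain B where B: "B \<in> D" "tv (atoms_of G) B" using cv unfolding cvalid_def by blast
        then have "is_atom B" using False by blast
        then obtain p where p: "B = Atom p" by (cases B) auto
        have "Atom p \<in> G" using B p by (auto simp: atoms_of_def)
        then have "G = (G - {Atom p}) \<union> {Atom p}" "D = {Atom p} \<union> (D - {Atom p})" using B p by auto
        then show ?thesis using CLp.init[of "G - {Atom p}" "D - {Atom p}" "Atom p"] fG fD by simp
      qed
    qed
  qed
qed

theorem theorem3:
  fixes G D :: "form set"
  assumes "finite G" and "finite D" and "valid G D"
  shows "CLp G D"
proof -
  have "cvalid G D" unfolding cvalid_def
  proof (intro allI impI)
    fix V assume GV: "\<forall>A\<in>G. tv V A"
    show "\<exists>B\<in>D. tv V B"
    proof (rule ccontr)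
      assume nD: "\<not> (\<exists>B\<in>D. tv V B)"
      have inf: "infer (Bv V) G D" using assms(3) wf_Bv ST_Bv unfolding valid_def by blast
      have sD: "support (Bv V) D"
      proof (cases "G = {}")
        case True then show ?thesis using inf unfolding infer_def by simp
      next
        case False
        then have "\<forall>Th. (\<forall>A\<in>G. finite (Th A) \<and> support (Bv V) (insert A (Atom ` Th A))) \<longrightarrow>
                support (Bv V) ((\<Union>A\<in>G. Atom ` Th A) \<union> D)"
          using inf wf_Bv unfolding infer_def by auto
        note spec[OF this, of "\<lambda>_::form. {}::nat set"]
        moreover have "\<forall>A\<in>G. finite {} \<and> support (Bv V) (insert A (Atom ` {}))"
          using M1[of _ V "Bv V"] wf_Bv GV by auto
        ultimately show ?thesis by auto
      qed
      have "derivable (Bv V) {} (atoms_of D)" using M2[OF assms(2) order_refl wf_Bv sD] nD by auto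
      from sound_Bv[OF this] obtain p where "p \<in> atoms_of D" "p \<in> V" by auto
      then show False using nD unfolding atoms_of_def by force
    qed
  qed
  then show ?thesis using CLp_aux assms(1,2) by blast
qed

end
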